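(* Let points $0,1,2,3$ of $\mathbb{P}^3(\mathbb{C})$ be represented by the standard basis vectors $e_0,e_1,e_2,e_3$ and points $i=4,\dots,9$ by arbitrary vectors $(x_i,y_i,z_i,w_i)$ (and $(x_i,y_i,z_i,w_i)$ for $i\le 3$ the corresponding standard basis coordinates). Let $N$ be the $10\times10$ matrix whose row $i$ ($i=0,\dots,9$) is $$(x_i^2,\ x_iy_i,\ x_iz_i,\ x_iw_i,\ y_i^2,\ y_iz_i,\ y_iw_i,\ z_i^2,\ z_iw_i,\ w_i^2),$$ let $M$ be the $4\times4$ matrix whose row indexed by $j\in\{6,7,8,9\}$ (in increasing order) is $\big([015j][234j],[012j][345j],[024j][135j],[045j][123j]\big)$, and let $Q=-x_5y_4z_5w_4 + x_4y_5z_5w_4 + x_5y_4z_4w_5 - x_4y_4z_5w_5$. Then $\det M = Q\cdot\det N$.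
   Context: $[abcd]$ denotes the determinant of the $4\times4$ matrix whose columns are the representative vectors of the points $a,b,c,d$. *)

theory Defs
  imports "Jordan_Normal_Form.Determinant"
begin

definition pt :: "(nat \<Rightarrow> complex) \<Rightarrow> (nat \<Rightarrow> complex) \<Rightarrow> (nat \<Rightarrow> complex) \<Rightarrow> (nat \<Rightarrow> complex)
    \<Rightarrow> nat \<Rightarrow> complex list" where
  "pt x y z w i = [x i, y i, z i, w i]"

definition bracket :: "(nat \<Rightarrow> complex list) \<Rightarrow> nat \<Rightarrow> nat \<Rightarrow> nat \<Rightarrow> nat \<Rightarrow> complex" where
  "bracket P a b c d = det (mat 4 4 (\<lambda>(r, s). P ([a, b, c, d] ! s) ! r))"

definition matN :: "(nat \<Rightarrow> complex) \<Rightarrow> (nat \<Rightarrow> complex) \<Rightarrow> (nat \<Rightarrow> complex) \<Rightarrow> (nat \<Rightarrow> complex)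
    \<Rightarrow> complex mat" where
  "matN x y z w = mat 10 10 (\<lambda>(i, k).
     [x i ^ 2, x i * y i, x i * z i, x i * w i, y i ^ 2, y i * z i, y i * w i,
      z i ^ 2, z i * w i, w i ^ 2] ! k)"

definition matM :: "(nat \<Rightarrow> complex) \<Rightarrow> (nat \<Rightarrow> complex) \<Rightarrow> (nat \<Rightarrow> complex) \<Rightarrow> (nat \<Rightarrow> complex)
    \<Rightarrow> complex mat" where
  "matM x y z w = mat 4 4 (\<lambda>(r, k). let P = pt x y z w; j = r + 6 in
     [bracket P 0 1 5 j * bracket P 2 3 4 j,
      bracket P 0 1 2 j * bracket P 3 4 5 j,
      bracket P 0 2 4 j * bracket P 1 3 5 j,
      bracket P 0 4 5 j * bracket P 1 2 3 j] ! k)"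

end

theory Submission imports Defs begin

lemma mat_delete_mat: "mat_delete (mat m n f) i j =
  mat (m-1) (n-1) (\<lambda>(i',j'). f (if i'<i then i' else Suc i', if j'<j then j' else Suc j'))"
  unfolding mat_delete_def by (rule eq_matI) auto

lemma det_mat0[simp]: "det (mat 0 0 f) = 1"
  by (rule det_dim_zero) auto

lemma det_mat_exp: assumes "0 < n" shows "det (mat n n f) = (\<Sum>j<n. f (0,j) *
  ((-1)^j * det (mat (n-1) (n-1) (\<lambda>(i',j'). f (Suc i', if j'<j then j' else Suc j')))))"
proof -
  have "det (mat n n f) = (\<Sum>j<n. mat n n f $$ (0,j) * cofactor (mat n n f) 0 j)"
    by (rule laplace_expansion_row) (use assms in auto)
  also have "\<dots> = (\<Sum>j<n. f (0,j) *
  ((-1)^j * det (mat (n-1) (n-1) (\<lambda>(i',j'). f (Suc i', if j'<j then j' else Suc j')))))"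
    by (rule sum.cong) (use assms in \<open>auto simp: cofactor_def mat_delete_mat\<close>)
  finally show ?thesis .
qed

lemma det_unit_row: assumes "0 < n" "k < n" "\<And>j. j<n \<Longrightarrow> j\<noteq>k \<Longrightarrow> f(0,j)=0"
  shows "det (mat n n f) = (-1)^k * f(0,k) * det (mat (n-1) (n-1) (\<lambda>(i',j'). f (Suc i', if j'<k then j' else Suc j')))"
proof -
  have "det (mat n n f) = (\<Sum>j<n. f (0,j) *
  ((-1)^j * det (mat (n-1) (n-1) (\<lambda>(i',j'). f (Suc i', if j'<j then j' else Suc j')))))"
    by (rule det_mat_exp[OF assms(1)])
  also have "\<dots> = f (0,k) *
  ((-1)^k * det (mat (n-1) (n-1) (\<lambda>(i',j'). f (Suc i', if j'<k then j' else Suc j'))))"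
    apply (subst sum.remove[of _ k])
    using assms by (auto intro!: sum.neutral)
  finally show ?thesis by simp
qed

lemma det_mat_exp': assumes "0 < n" shows "det (mat n n f) = (\<Sum>j<n. f (0,j) *
  ((-1)^j * det (mat (n-1) (n-1) (\<lambda>(i',j'). f (i'+1, if j'<j then j' else j'+1)))))"
  using det_mat_exp[OF assms, of f] by (simp only: Suc_eq_plus1)

lemma det4: "det (mat 4 4 (f :: nat \<times> nat \<Rightarrow> complex)) = (f (0, 0) * (f (1, 1) * (f (2, 2) * f (3, 3) - f (2, 3) * f (3, 2)) - f (1, 2) * (f (2, 1) * f (3, 3) - f (2, 3) * f (3, 1)) + f (1, 3) * (f (2, 1) * f (3, 2) - f (2, 2) * f (3, 1))) - f (0, 1) * (f (1, 0) * (f (2, 2) * f (3, 3) - f (2, 3) * f (3, 2)) - f (1, 2) * (f (2, 0) * f (3, 3) - f (2, 3) * f (3, 0)) + f (1, 3) * (f (2, 0) * f (3, 2) - f (2, 2) * f (3, 0))) + f (0, 2) * (f (1, 0) * (f (2, 1) * f (3, 3) - f (2, 3) * f (3, 1)) - f (1, 1) * (f (2, 0) * f (3, 3) - f (2, 3) * f (3, 0)) + f (1, 3) * (f (2, 0) * f (3, 1) - f (2, 1) * f (3, 0))) - f (0, 3) * (f (1, 0) * (f (2, 1) * f (3, 2) - f (2, 2) * f (3, 1)) - f (1, 1) * (f (2, 0) * f (3, 2) - f (2, 2) * f (3, 0)) + f (1, 2) * (f (2, 0) * f (3, 1) - f (2, 1) * f (3, 0))))"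
  apply (simp add: det_mat_exp' lessThan_nat_numeral)
  apply (simp only: One_nat_def[symmetric] Suc_1 Suc_numeral add_num_simps numeral_One)
  by (simp add: algebra_simps)

lemma det5_exp: "det (mat 5 5 f) = (\<Sum>j<5. f (0,j) *
  ((-1)^j * det (mat 4 4 (\<lambda>(i',j'). f (i'+1, if j'<j then j' else j'+1)))))"
  using det_mat_exp'[of 5 f] by simp

lemma det6_exp: "det (mat 6 6 f) = (\<Sum>j<6. f (0,j) *
  ((-1)^j * det (mat 5 5 (\<lambda>(i',j'). f (i'+1, if j'<j then j' else j'+1)))))"
  using det_mat_exp'[of 6 f] by simp

theorem mainTheorem7:
  fixes x y z w :: "nat \<Rightarrow> complex"
  assumes std: "\<And>i. i < 4 \<Longrightarrow>
      x i = (if i = 0 then 1 else 0) \<and> y i = (if i = 1 then 1 else 0) \<and>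
      z i = (if i = 2 then 1 else 0) \<and> w i = (if i = 3 then 1 else 0)"
  shows "det (matM x y z w) =
    (- x 5 * y 4 * z 5 * w 4 + x 4 * y 5 * z 5 * w 4 + x 5 * y 4 * z 4 * w 5
     - x 4 * y 4 * z 5 * w 5) * det (matN x y z w)"
proof -
  have s: "x 0 = 1" "y 0 = 0" "z 0 = 0" "w 0 = 0"
    "x 1 = 0" "y 1 = 1" "z 1 = 0" "w 1 = 0"
    "x 2 = 0" "y 2 = 0" "z 2 = 1" "w 2 = 0"
    "x 3 = 0" "y 3 = 0" "z 3 = 0" "w 3 = 1"
    using std[of 0] std[of 1] std[of 2] std[of 3] by simp_all
  note s2 = s[unfolded One_nat_def numeral_2_eq_2 numeral_3_eq_3]
  have N: "det (matN x y z w) = det (mat 6 6 (\<lambda>(i,k). [x (i+4) * y (i+4), x (i+4) * z (i+4),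
     x (i+4) * w (i+4), y (i+4) * z (i+4), y (i+4) * w (i+4), z (i+4) * w (i+4)] ! k))"
    unfolding matN_def
    apply (subst det_unit_row[where k=0])
      apply simp apply simp
     apply (simp add: s eval_nat_numeral less_Suc_eq) apply (auto simp: s s2)[1]
    apply (subst det_unit_row[where k=3])
      apply simp apply simp
     apply (simp add: s eval_nat_numeral less_Suc_eq) apply (auto simp: s s2)[1]
    apply (subst det_unit_row[where k=5])
      apply simp apply simp
     apply (simp add: s eval_nat_numeral less_Suc_eq) apply (auto simp: s s2)[1]
    apply (subst det_unit_row[where k=6])
      apply simp apply simp
     apply (simp add: s eval_nat_numeral less_Suc_eq) apply (auto simp: s s2)[1]
    apply (simp add: s s2)
    apply (rule arg_cong[where f=det])
    apply (rule eq_matI)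
    apply (auto simp: eval_nat_numeral less_Suc_eq)
    done
  show ?thesis
    unfolding N matM_def
    apply (simp add: bracket_def pt_def det6_exp det5_exp det4 lessThan_nat_numeral s s2 Let_def)
    by Groebner_Basis.algebra
qed

end
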